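(* Consider a finite Markov decision process with state set $\mathcal S$, action set $\mathcal A$, transition function $P$, reward function $R$, initial state distribution $d_0$ and discount factor $\gamma\in[0,1)$, together with a finite set of options $\mathcal O$ in which every option $o$ has an intra-option policy $\pi_o(s,a,\theta)$ (a probability distribution over $a\in\mathcal A$ for each $s$), differentiable in a parameter vector $\theta$, a termination function $\beta_o(s)\in[0,1]$, and a policy over options $\pi_{\mathcal O}(s,o)$. Let $X=(S_0,O_0,A_0,S_1,O_1,A_1,\dots)$ be the random path generated by the option dynamics described in the context, and for $\mathcal T\in\mathbb N$ let $G^{\mathcal T}_\theta$ be the $\mathcal T$-step finite horizon Fisher information matrix with respect to $\theta$, i.e. the Fisher information matrix of the distribution of the path truncated to terminate at time step $\mathcal T$: $$\big(G^{\mathcal T}_\theta\big)_{i,j}=\mathbb E\Big[\frac{\partial \ln \Pr(X_{0:\mathcal T};\theta)}{\partial\theta_i}\frac{\partial \ln \Pr(X_{0:\mathcal T};\theta)}{\partial\theta_j}\Big] .$$ Let $\mu_{\mathcal O}(s,o)$ denote the stationary distribution of state-option pairs $(s,o)$ of this process. Then $$\lim_{\mathcal T\to\infty}\frac{1}{\mathcal T}G^{\mathcal T}_\theta=\langle G_\theta\rangle_{\mu_{\mathcal O}(s,o)},\qquad\text{where}\qquad \big(\langle G_\theta\rangle_{\mu_{\mathcal O}(s,o)}\big)_{i,j}=\sum_{s,o}\mu_{\mathcal O}(s,o)\sum_{a}\pi_o(s,a,\theta)\,\frac{\partial\ln\pi_o(s,a,\theta)}{\partial\theta_i}\frac{\partial\ln\pi_o(s,a,\theta)}{\partial\theta_j},$$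 i.e. the limit equals the Fisher information matrix of the intra-option policies under the stationary distribution $\pi_o(s,a,\theta)\mu_{\mathcal O}(s,o)$ of states, options and actions.
   Context: Option dynamics (option-critic framework, all options available in every state): at time $t$ the agent is in state $S_t$ with active option $O_t$; it draws $A_t\sim\pi_{O_t}(S_t,\cdot,\theta)$, receives a reward $R_t$ with $\mathbb E[R_t\mid S_t=s,A_t=a]=R(s,a)$, and the environment moves to $S_{t+1}\sim P(S_t,A_t,\cdot)$. The next option is then drawn with probability $\Pr(O_{t+1}=o'\mid O_t=o,S_{t+1}=s')=(1-\beta_o(s'))\mathbf 1_{o'=o}+\beta_o(s')\pi_{\mathcal O}(s',o')$. The initial pair $(S_0,O_0)=(s_0,o_0)$ is given. The discounted problem is treated as an undiscounted one in which the process terminates with probability $1-\gamma$ at each step. The process of state-option pairs is assumed ergodic and irreducible, so that $\mu_{\mathcal O}(s,o)$ is a well-defined stationary distribution. *)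

theory Defs
  imports "HOL-Analysis.Analysis"
begin

definition partial :: "'p::finite \<Rightarrow> (real^'p \<Rightarrow> real) \<Rightarrow> real^'p \<Rightarrow> real" where
  "partial i f th = deriv (\<lambda>t. f (th + t *\<^sub>R axis i 1)) 0"

text \<open>Option switching probability Pr(O_{t+1}=q' | O_t=q, S_{t+1}=s').\<close>
definition opt_next :: "('q \<Rightarrow> 's \<Rightarrow> real) \<Rightarrow> ('s \<Rightarrow> 'q \<Rightarrow> real) \<Rightarrow> 'q \<Rightarrow> 's \<Rightarrow> 'q \<Rightarrow> real" where
  "opt_next \<beta> \<pi>O q s' q' = (1 - \<beta> q s') * (if q' = q then 1 else 0) + \<beta> q s' * \<pi>O s' q'"

text \<open>Probability of a path segment (S_t,O_t,A_t),...,(S_{t+k},O_{t+k},A_{t+k}) given (S_t,O_t).\<close>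
fun path_prob_aux :: "('q \<Rightarrow> 's \<Rightarrow> 'a \<Rightarrow> real^'p \<Rightarrow> real) \<Rightarrow> ('s \<Rightarrow> 'a \<Rightarrow> 's \<Rightarrow> real)
    \<Rightarrow> ('q \<Rightarrow> 's \<Rightarrow> real) \<Rightarrow> ('s \<Rightarrow> 'q \<Rightarrow> real) \<Rightarrow> real^'p \<Rightarrow> ('s \<times> 'q \<times> 'a) list \<Rightarrow> real" where
  "path_prob_aux \<pi> P \<beta> \<pi>O th [] = 1"
| "path_prob_aux \<pi> P \<beta> \<pi>O th [(s, q, a)] = \<pi> q s a th"
| "path_prob_aux \<pi> P \<beta> \<pi>O th ((s, q, a) # (s', q', a') # xs) =
     \<pi> q s a th * P s a s' * opt_next \<beta> \<pi>O q s' q' * path_prob_aux \<pi> P \<beta> \<pi>O th ((s', q', a') # xs)"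

text \<open>Probability of the truncated path X_{0:T} = ((S_0,O_0,A_0),...,(S_{T-1},O_{T-1},A_{T-1}))
  when (S_0,O_0) = (s0,q0).\<close>
definition path_prob where
  "path_prob \<pi> P \<beta> \<pi>O s0 q0 th xs =
     (case xs of [] \<Rightarrow> 1
      | (s, q, a) # _ \<Rightarrow> if s = s0 \<and> q = q0 then path_prob_aux \<pi> P \<beta> \<pi>O th xs else 0)"

definition fisher_T where
  "fisher_T \<pi> P \<beta> \<pi>O s0 q0 th T i j =
     (\<Sum>xs\<in>{xs :: ('s::finite \<times> 'q::finite \<times> 'a::finite) list. length xs = T}.
        path_prob \<pi> P \<beta> \<pi>O s0 q0 th xs
        * partial i (\<lambda>th'. ln (path_prob \<pi> P \<beta> \<pi>O s0 q0 th' xs)) th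
        * partial j (\<lambda>th'. ln (path_prob \<pi> P \<beta> \<pi>O s0 q0 th' xs)) th)"

definition so_kernel where
  "so_kernel \<pi> P \<beta> \<pi>O th = (\<lambda>(s, q) (s', q').
     (\<Sum>a\<in>(UNIV :: 'a::finite set). \<pi> q s a th * P s a s' * opt_next \<beta> \<pi>O q s' q'))"

fun kpow :: "('x::finite \<Rightarrow> 'x \<Rightarrow> real) \<Rightarrow> nat \<Rightarrow> 'x \<Rightarrow> 'x \<Rightarrow> real" where
  "kpow K 0 x y = (if x = y then 1 else 0)"
| "kpow K (Suc n) x y = (\<Sum>z\<in>UNIV. kpow K n x z * K z y)"

definition irreducible_chain :: "('x::finite \<Rightarrow> 'x \<Rightarrow> real) \<Rightarrow> bool" where
  "irreducible_chain K \<longleftrightarrow> (\<forall>x y. \<exists>n. kpow K n x y > 0)"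

definition aperiodic_chain :: "('x::finite \<Rightarrow> 'x \<Rightarrow> real) \<Rightarrow> bool" where
  "aperiodic_chain K \<longleftrightarrow> (\<forall>x. Gcd {n. n > 0 \<and> kpow K n x x > 0} = 1)"

definition stationary_dist :: "('x::finite \<Rightarrow> 'x \<Rightarrow> real) \<Rightarrow> ('x \<Rightarrow> real) \<Rightarrow> bool" where
  "stationary_dist K \<mu> \<longleftrightarrow> (\<forall>x. \<mu> x \<ge> 0) \<and> (\<Sum>x\<in>UNIV. \<mu> x) = 1 \<and>
     (\<forall>y. (\<Sum>x\<in>UNIV. \<mu> x * K x y) = \<mu> y)"

definition avg_fisher where
  "avg_fisher \<pi> \<mu> th i j =
     (\<Sum>(s, q)\<in>UNIV. \<mu> (s, q) * (\<Sum>a\<in>(UNIV :: 'a::finite set). \<pi> q s a th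
        * partial i (\<lambda>th'. ln (\<pi> q s a th')) th * partial j (\<lambda>th'. ln (\<pi> q s a th')) th))"

end

theory Submission
  imports Defs
begin


lemma kpow_nonneg: assumes "\<And>x y. K x y \<ge> 0" shows "kpow K n x y \<ge> 0"
  by (induction n arbitrary: y) (auto intro!: sum_nonneg mult_nonneg_nonneg assms)

lemma kpow_rowsum: assumes "\<And>x. (\<Sum>y\<in>UNIV. K x y) = 1" shows "(\<Sum>y\<in>UNIV. kpow K n x y) = 1"
proof (induction n)
  case 0 then show ?case by simp
next
  case (Suc n)
  have "(\<Sum>y\<in>UNIV. kpow K (Suc n) x y) = (\<Sum>z\<in>UNIV. kpow K n x z * (\<Sum>y\<in>UNIV. K z y))"
    by (simp add: sum_distrib_left) (rule sum.swap)
  also have "\<dots> = 1" using Suc assms by simp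
  finally show ?case .
qed

lemma kpow_add: "kpow K (m + n) x y = (\<Sum>z\<in>UNIV. kpow K m x z * kpow K n z y)"
proof (induction n arbitrary: y)
  case 0 then show ?case by (simp add: if_distrib cong: if_cong)
next
  case (Suc n)
  have "kpow K (m + Suc n) x y = (\<Sum>w\<in>UNIV. (\<Sum>z\<in>UNIV. kpow K m x z * kpow K n z w) * K w y)"
    using Suc by simp
  also have "\<dots> = (\<Sum>z\<in>UNIV. kpow K m x z * kpow K (Suc n) z y)"
    by (simp add: sum_distrib_left sum_distrib_right mult.assoc) (rule sum.swap)
  finally show ?case .
qed

lemma kpow_one: "kpow K (Suc 0) x z = K x z"
proof -
  have "kpow K (Suc 0) x z = (\<Sum>w\<in>UNIV. (if w = x then K w z else 0))"
    by (simp add: if_distrib[of "\<lambda>u. u * K _ z"] eq_commute cong: if_cong)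
  also have "\<dots> = K x z" by (simp add: sum.delta)
  finally show ?thesis .
qed

lemma kpow_Suc_left: "kpow K (Suc n) x y = (\<Sum>z\<in>UNIV. K x z * kpow K n z y)"
  using kpow_add[of K "Suc 0" n x y] by (simp only: kpow_one) simp

lemma stat_kpow: assumes "\<And>y. (\<Sum>x\<in>UNIV. h x * K x y) = h y"
  shows "(\<Sum>x\<in>UNIV. h x * kpow K n x y) = h y"
proof (induction n arbitrary: y)
  case 0 then show ?case by (simp add: if_distrib cong: if_cong)
next
  case (Suc n)
  have "(\<Sum>x\<in>UNIV. h x * kpow K (Suc n) x y) = (\<Sum>z\<in>UNIV. (\<Sum>x\<in>UNIV. h x * kpow K n x z) * K z y)"
    by (simp add: sum_distrib_left sum_distrib_right mult.assoc) (rule sum.swap)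
  also have "\<dots> = h y" using Suc assms by simp
  finally show ?case .
qed

lemma stat_pos:
  assumes K: "\<And>x y. K x y \<ge> 0" and irr: "irreducible_chain K" and st: "stationary_dist K \<mu>"
  shows "\<mu> x > 0"
proof -
  have nn: "\<And>x. \<mu> x \<ge> 0" and s1: "(\<Sum>x\<in>UNIV. \<mu> x) = 1"
    and sk: "\<And>y. (\<Sum>x\<in>UNIV. \<mu> x * K x y) = \<mu> y" using st unfolding stationary_dist_def by auto
  have "\<exists>y. \<mu> y > 0"
  proof (rule ccontr)
    assume "\<not> (\<exists>y. \<mu> y > 0)"
    then have "\<forall>y. \<mu> y = 0" using nn by (meson antisym not_less)
    then show False using s1 by simp
  qed
  then obtain y where y: "\<mu> y > 0" by blast
  obtain n where n: "kpow K n y x > 0" using irr unfolding irreducible_chain_def by blast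
  have "\<mu> y * kpow K n y x \<le> (\<Sum>z\<in>UNIV. \<mu> z * kpow K n z x)"
    by (rule member_le_sum) (auto intro!: mult_nonneg_nonneg nn kpow_nonneg K)
  also have "\<dots> = \<mu> x" by (rule stat_kpow[OF sk])
  finally show ?thesis using y n by (smt (verit) mult_pos_pos)
qed

lemma stat_unique:
  assumes K: "\<And>x y. K x y \<ge> 0" and irr: "irreducible_chain K"
    and st: "stationary_dist K \<mu>" and st2: "stationary_dist K \<nu>"
  shows "\<nu> = \<mu>"
proof -
  have mp: "\<And>x. \<mu> x > 0" using stat_pos[OF K irr st] .
  have nn: "\<And>x. \<nu> x \<ge> 0" and s1: "(\<Sum>x\<in>UNIV. \<nu> x) = 1"
    and sk: "\<And>y. (\<Sum>x\<in>UNIV. \<nu> x * K x y) = \<nu> y" using st2 unfolding stationary_dist_def by auto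
  have s1m: "(\<Sum>x\<in>UNIV. \<mu> x) = 1"
    and skm: "\<And>y. (\<Sum>x\<in>UNIV. \<mu> x * K x y) = \<mu> y" using st unfolding stationary_dist_def by auto
  define c where "c = Min (range (\<lambda>x. \<nu> x / \<mu> x))"
  have "c \<in> range (\<lambda>x. \<nu> x / \<mu> x)" unfolding c_def by (rule Min_in) auto
  then obtain xs where xs: "c = \<nu> xs / \<mu> xs" by blast
  have cle: "c \<le> \<nu> x / \<mu> x" for x unfolding c_def by (rule Min_le) auto
  define h where "h x = \<nu> x - c * \<mu> x" for x
  have hnn: "h x \<ge> 0" for x using cle[of x] mp[of x] unfolding h_def by (simp add: field_simps)
  have h0: "h xs = 0" using xs mp[of xs] unfolding h_def by simp
  have hst: "(\<Sum>x\<in>UNIV. h x * K x y) = h y" for y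
    unfolding h_def by (simp add: left_diff_distrib sum_subtractf sum_distrib_left mult.assoc sk skm
        flip: sum_distrib_left)
  have hz: "h x = 0" for x
  proof -
    obtain n where n: "kpow K n x xs > 0" using irr unfolding irreducible_chain_def by blast
    have "h x * kpow K n x xs \<le> (\<Sum>z\<in>UNIV. h z * kpow K n z xs)"
      by (rule member_le_sum) (auto intro!: mult_nonneg_nonneg hnn kpow_nonneg K)
    also have "\<dots> = 0" using stat_kpow[of h K, OF hst] h0 by simp
    finally show ?thesis using n hnn[of x] by (smt (verit) mult_pos_pos)
  qed
  then have nu: "\<nu> x = c * \<mu> x" for x unfolding h_def by (metis eq_iff_diff_eq_0)
  have "1 = c" using s1 s1m by (simp add: nu flip: sum_distrib_left)
  then show ?thesis using nu by auto
qed



declare sum.lessThan_Suc[simp del]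

lemma cesaro:
  fixes K :: "'x::finite \<Rightarrow> 'x \<Rightarrow> real"
  assumes K: "\<And>x y. K x y \<ge> 0" and rs: "\<And>x. (\<Sum>y\<in>UNIV. K x y) = 1"
    and irr: "irreducible_chain K" and st: "stationary_dist K \<mu>"
  shows "(\<lambda>T. (\<Sum>t<T. kpow K t x0 y) / real T) \<longlonglongrightarrow> \<mu> y"
proof -
  define V where "V T = (\<chi> z. (\<Sum>t<Suc T. kpow K t x0 z) / real (Suc T))" for T
  define M where "M = (\<chi> z. \<mu> z)"
  have Vnn: "V T $ z \<ge> 0" for T z
    unfolding V_def by (auto simp del: sum.lessThan_Suc intro!: divide_nonneg_nonneg sum_nonneg kpow_nonneg K)
  have Vs: "(\<Sum>z\<in>UNIV. V T $ z) = 1" for T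
  proof -
    have "(\<Sum>z\<in>UNIV. V T $ z) = (\<Sum>t<Suc T. \<Sum>z\<in>UNIV. kpow K t x0 z) / real (Suc T)"
      unfolding V_def by (simp add: sum_divide_distrib[symmetric]) (rule sum.swap)
    also have "\<dots> = 1" by (simp add: kpow_rowsum[OF rs])
    finally show ?thesis .
  qed
  have kle: "kpow K t x z \<le> 1" for t x z
  proof -
    have "kpow K t x z \<le> (\<Sum>w\<in>UNIV. kpow K t x w)"
      by (rule member_le_sum) (auto intro!: kpow_nonneg K)
    then show ?thesis by (simp add: kpow_rowsum[OF rs])
  qed
  define D where "D y T = (kpow K (Suc T) x0 y - kpow K 0 x0 y) / real (Suc T)" for y T
  have VD: "(\<Sum>x\<in>UNIV. V T $ x * K x y) - V T $ y = D y T" for T y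
  proof -
    have "(\<Sum>x\<in>UNIV. V T $ x * K x y) = (\<Sum>t<Suc T. kpow K (Suc t) x0 y) / real (Suc T)"
      unfolding V_def by (simp add: sum_divide_distrib[symmetric] sum_distrib_right) (rule sum.swap)
    then have "(\<Sum>x\<in>UNIV. V T $ x * K x y) - V T $ y = (\<Sum>t<Suc T. kpow K (Suc t) x0 y - kpow K t x0 y) / real (Suc T)"
      unfolding V_def by (simp add: sum_subtractf diff_divide_distrib)
    also have "\<dots> = D y T" unfolding D_def using sum_lessThan_telescope[of "\<lambda>t. kpow K t x0 y" "Suc T"] by simp
    finally show ?thesis .
  qed
  have D0: "D y \<longlonglongrightarrow> 0" for y
  proof (rule Lim_null_comparison)
    show "\<forall>\<^sub>F T in sequentially. norm (D y T) \<le> inverse (real (Suc T))"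
    proof (rule always_eventually, rule allI)
      fix T
      have "\<bar>kpow K (Suc T) x0 y - kpow K 0 x0 y\<bar> \<le> 1"
        using kle[of "Suc T" x0 y] kle[of 0 x0 y] kpow_nonneg[of K, OF K, where n="Suc T" and x=x0 and y=y] kpow_nonneg[of K, OF K, where n=0 and x=x0 and y=y]
        by linarith
      then show "norm (D y T) \<le> inverse (real (Suc T))"
        unfolding D_def by (simp add: abs_divide divide_le_cancel field_simps del: of_nat_Suc)
    qed
    show "(\<lambda>T. inverse (real (Suc T))) \<longlonglongrightarrow> 0"
      using LIMSEQ_inverse_real_of_nat by simp
  qed
  have bnd: "bounded (range V)"
    unfolding bounded_iff
  proof (intro exI ballI)
    fix v assume "v \<in> range V"
    then obtain T where v: "v = V T" by blast
    have "norm v \<le> (\<Sum>z\<in>UNIV. \<bar>v $ z\<bar>)" by (rule norm_le_l1_cart)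
    also have "\<dots> = 1" using Vs[of T] Vnn[of T] v by simp
    finally show "norm v \<le> 1" .
  qed
  have conv: "V \<longlonglongrightarrow> M"
  proof (rule ccontr)
    assume "\<not> V \<longlonglongrightarrow> M"
    then obtain e where e: "e > 0" and ne: "\<not> eventually (\<lambda>n. dist (V n) M < e) sequentially"
      unfolding tendsto_iff by blast
    obtain r :: "nat \<Rightarrow> nat" where r: "strict_mono r" and rr: "\<And>n. \<not> dist (V (r n)) M < e"
      using not_eventually_sequentiallyD[OF ne] by (auto simp del: not_less)
    have "bounded (range (V \<circ> r))" using bnd by (rule bounded_subset) auto
    then obtain l r' where r': "strict_mono r'" and lim: "((V \<circ> r) \<circ> r') \<longlonglongrightarrow> l"
      using bounded_imp_convergent_subsequence by blast
    define \<sigma> where "\<sigma> = r \<circ> r'"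
    have sm: "strict_mono \<sigma>" unfolding \<sigma>_def using r r' by (rule strict_mono_o)
    have lim': "(\<lambda>n. V (\<sigma> n)) \<longlonglongrightarrow> l" using lim unfolding \<sigma>_def by (simp add: o_def)
    have comp: "(\<lambda>n. V (\<sigma> n) $ z) \<longlonglongrightarrow> l $ z" for z
      by (rule tendsto_vec_nth[OF lim'])
    have "stationary_dist K (\<lambda>z. l $ z)"
      unfolding stationary_dist_def
    proof (intro conjI allI)
      fix z show "l $ z \<ge> 0"
        by (rule LIMSEQ_le_const[OF comp]) (auto intro: Vnn)
    next
      have "(\<lambda>n. \<Sum>z\<in>UNIV. V (\<sigma> n) $ z) \<longlonglongrightarrow> (\<Sum>z\<in>UNIV. l $ z)"
        by (intro tendsto_sum comp)
      then show "(\<Sum>z\<in>UNIV. l $ z) = 1" using Vs by (simp add: LIMSEQ_const_iff)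
    next
      fix y
      have "(\<lambda>n. (\<Sum>x\<in>UNIV. V (\<sigma> n) $ x * K x y) - V (\<sigma> n) $ y) \<longlonglongrightarrow> (\<Sum>x\<in>UNIV. l $ x * K x y) - l $ y"
        by (intro tendsto_intros comp)
      moreover have "(\<lambda>n. (\<Sum>x\<in>UNIV. V (\<sigma> n) $ x * K x y) - V (\<sigma> n) $ y) \<longlonglongrightarrow> 0"
        using LIMSEQ_subseq_LIMSEQ[OF D0 sm, of y] by (simp add: VD o_def)
      ultimately have "(\<Sum>x\<in>UNIV. l $ x * K x y) - l $ y = 0" by (rule LIMSEQ_unique)
      then show "(\<Sum>x\<in>UNIV. l $ x * K x y) = l $ y" by simp
    qed
    then have "(\<lambda>z. l $ z) = \<mu>" by (rule stat_unique[OF K irr st])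
    then have "l = M" unfolding M_def by (simp add: vec_eq_iff)
    then obtain N where "\<forall>n\<ge>N. dist (V (\<sigma> n)) M < e"
      using tendstoD[OF lim' e] unfolding eventually_sequentially by blast
    then show False using rr[of "r' N"] unfolding \<sigma>_def by simp
  qed
  have "(\<lambda>T. V T $ y) \<longlonglongrightarrow> M $ y" by (rule tendsto_vec_nth[OF conv])
  then have "(\<lambda>T. (\<Sum>t<Suc T. kpow K t x0 y) / real (Suc T)) \<longlonglongrightarrow> \<mu> y"
    unfolding V_def M_def by simp
  then show ?thesis by (rule LIMSEQ_imp_Suc)
qed

declare sum.lessThan_Suc[simp]



lemma opt_next_nonneg:
  assumes "\<And>q s. 0 \<le> \<beta> q s \<and> \<beta> q s \<le> 1" "\<And>s q. \<pi>O s q \<ge> 0"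
  shows "opt_next \<beta> \<pi>O q s q' \<ge> 0"
  using assms(1)[of q s] assms(2)[of s q'] unfolding opt_next_def by auto

lemma opt_next_sum:
  assumes "\<And>s. (\<Sum>q\<in>UNIV. \<pi>O s q) = 1"
  shows "(\<Sum>q'\<in>(UNIV::'q::finite set). opt_next \<beta> \<pi>O q s q') = 1"
  unfolding opt_next_def using assms[of s]
  by (simp add: sum.distrib sum_distrib_left[symmetric] if_distrib[of "\<lambda>u. _ * u"] cong: if_cong)

lemma sum_pair: "(\<Sum>x\<in>(UNIV::('b::finite \<times> 'c::finite) set). g x) = (\<Sum>s\<in>UNIV. \<Sum>q\<in>UNIV. g (s, q))"
  by (simp add: sum.cartesian_product flip: UNIV_Times_UNIV)

locale optn =
  fixes \<pi> :: "'q::finite \<Rightarrow> 's::finite \<Rightarrow> 'a::finite \<Rightarrow> real^'p \<Rightarrow> real"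
    and P :: "'s \<Rightarrow> 'a \<Rightarrow> 's \<Rightarrow> real"
    and \<beta> :: "'q \<Rightarrow> 's \<Rightarrow> real"
    and \<pi>O :: "'s \<Rightarrow> 'q \<Rightarrow> real"
    and th :: "real^'p"
  assumes P_nonneg: "\<And>s a s'. P s a s' \<ge> 0"
    and P_sum: "\<And>s a. (\<Sum>s'\<in>UNIV. P s a s') = 1"
    and \<pi>_nonneg: "\<And>q s a th'. \<pi> q s a th' \<ge> 0"
    and \<pi>_sum: "\<And>q s th'. (\<Sum>a\<in>UNIV. \<pi> q s a th') = 1"
    and \<pi>_diff: "\<And>q s a. (\<lambda>th'. \<pi> q s a th') differentiable (at th)"
    and \<beta>_range: "\<And>q s. 0 \<le> \<beta> q s \<and> \<beta> q s \<le> 1"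
    and \<pi>O_nonneg: "\<And>s q. \<pi>O s q \<ge> 0"
    and \<pi>O_sum: "\<And>s. (\<Sum>q\<in>UNIV. \<pi>O s q) = 1"
begin

definition Dp :: "'p \<Rightarrow> 'q \<Rightarrow> 's \<Rightarrow> 'a \<Rightarrow> real" where
  "Dp i q s a = deriv (\<lambda>t. \<pi> q s a (th + t *\<^sub>R axis i 1)) 0"
definition d :: "'p \<Rightarrow> 'q \<Rightarrow> 's \<Rightarrow> 'a \<Rightarrow> real" where
  "d i q s a = partial i (\<lambda>th'. ln (\<pi> q s a th')) th"
definition dk :: "'p \<Rightarrow> 's \<times> 'q \<times> 'a \<Rightarrow> real" where
  "dk i y = (case y of (s, q, a) \<Rightarrow> d i q s a)"
definition sc :: "'p \<Rightarrow> ('s \<times> 'q \<times> 'a) list \<Rightarrow> real" where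
  "sc i xs = sum_list (map (dk i) xs)"
abbreviation pa where "pa th' xs \<equiv> path_prob_aux \<pi> P \<beta> \<pi>O th' xs"

lemma opt_nn: "opt_next \<beta> \<pi>O q s q' \<ge> 0"
  by (rule opt_next_nonneg[OF \<beta>_range \<pi>O_nonneg])

lemma pi_has: "((\<lambda>t. \<pi> q s a (th + t *\<^sub>R axis i 1)) has_real_derivative Dp i q s a) (at 0)"
proof -
  have "((\<lambda>t::real. th + t *\<^sub>R axis i 1) has_derivative (\<lambda>t. t *\<^sub>R axis i 1)) (at 0)"
    by (auto intro!: derivative_eq_intros)
  then have "(\<lambda>t::real. th + t *\<^sub>R axis i 1) differentiable (at 0)"
    by (rule differentiableI)
  moreover have "(\<lambda>th'. \<pi> q s a th') differentiable (at ((\<lambda>t::real. th + t *\<^sub>R axis i 1) 0))"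
    using \<pi>_diff by simp
  ultimately have "((\<lambda>th'. \<pi> q s a th') \<circ> (\<lambda>t::real. th + t *\<^sub>R axis i 1)) differentiable (at 0)"
    by (rule differentiable_chain_at)
  then show ?thesis unfolding Dp_def o_def DERIV_deriv_iff_real_differentiable .
qed

lemma d_eq: assumes "\<pi> q s a th > 0" shows "d i q s a = Dp i q s a / \<pi> q s a th"
proof -
  have "((\<lambda>t. ln (\<pi> q s a (th + t *\<^sub>R axis i 1))) has_real_derivative (1 / \<pi> q s a th) * Dp i q s a) (at 0)"
    using DERIV_chain2[OF DERIV_ln_divide pi_has, of q s a i] assms by simp
  then show ?thesis unfolding d_def partial_def by (simp add: DERIV_imp_deriv)
qed

lemma pi_d: "\<pi> q s a th * d i q s a = Dp i q s a"
proof (cases "\<pi> q s a th > 0")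
  case True then show ?thesis by (simp add: d_eq)
next
  case False
  then have z: "\<pi> q s a th = 0" using \<pi>_nonneg[of q s a th] by simp
  have "Dp i q s a = 0"
    by (rule DERIV_local_min[OF pi_has, of 1]) (auto simp: z \<pi>_nonneg)
  then show ?thesis using z by simp
qed

lemma sum_pi_d: "(\<Sum>a\<in>UNIV. \<pi> q s a th * d i q s a) = 0"
proof -
  have "((\<lambda>t. \<Sum>a\<in>UNIV. \<pi> q s a (th + t *\<^sub>R axis i 1)) has_real_derivative (\<Sum>a\<in>UNIV. Dp i q s a)) (at 0)"
    by (rule DERIV_sum) (rule pi_has)
  then have "((\<lambda>t. 1) has_real_derivative (\<Sum>a\<in>UNIV. Dp i q s a)) (at 0)"
    by (simp add: \<pi>_sum)
  then have "(\<Sum>a\<in>UNIV. Dp i q s a) = 0"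
    using DERIV_const DERIV_unique by blast
  then show ?thesis by (simp add: pi_d)
qed

lemma pa_nonneg: "pa th' xs \<ge> 0"
proof (induction xs rule: induct_list012)
  case 1 then show ?case by simp
next
  case (2 x) then show ?case by (cases x) (simp add: \<pi>_nonneg)
next
  case (3 x y zs)
  then show ?case
    by (cases x; cases y) (auto intro!: mult_nonneg_nonneg \<pi>_nonneg P_nonneg opt_nn)
qed

lemma pa_deriv:
  "pa th xs > 0 \<Longrightarrow> ((\<lambda>t. pa (th + t *\<^sub>R axis i 1) xs) has_real_derivative pa th xs * sc i xs) (at 0)"
proof (induction xs rule: induct_list012)
  case 1 then show ?case by (simp add: sc_def)
next
  case (2 x)
  obtain s q a where x: "x = (s, q, a)" by (cases x)
  show ?case using pi_has[of q s a i] by (simp add: x sc_def dk_def pi_d)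
next
  case (3 x y zs)
  obtain s q a where x: "x = (s, q, a)" by (cases x)
  obtain s' q' a' where y: "y = (s', q', a')" by (cases y)
  define C where "C = P s a s' * opt_next \<beta> \<pi>O q s' q'"
  have pos: "\<pi> q s a th * C * pa th (y # zs) > 0" using "3.prems" by (simp add: x y C_def mult_ac)
  have C: "C \<ge> 0" unfolding C_def by (intro mult_nonneg_nonneg P_nonneg opt_nn)
  have r0: "pa th (y # zs) \<noteq> 0" using pos by auto
  then have rpos: "pa th (y # zs) > 0" using pa_nonneg[of th "y # zs"] by simp
  have hm: "((\<lambda>t. (C * \<pi> q s a (th + t *\<^sub>R axis i 1)) * pa (th + t *\<^sub>R axis i 1) (y # zs))
      has_real_derivative (C * Dp i q s a) * pa (th + 0 *\<^sub>R axis i 1) (y # zs)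
         + (pa th (y # zs) * sc i (y # zs)) * (C * \<pi> q s a (th + 0 *\<^sub>R axis i 1))) (at 0)"
    by (rule DERIV_mult[OF DERIV_cmult[OF pi_has] "3.IH"(2)[OF rpos]])
  have eqf: "(\<lambda>t. pa (th + t *\<^sub>R axis i 1) (x # y # zs))
      = (\<lambda>t. (C * \<pi> q s a (th + t *\<^sub>R axis i 1)) * pa (th + t *\<^sub>R axis i 1) (y # zs))"
    by (simp add: x y C_def fun_eq_iff mult_ac)
  have val: "(C * Dp i q s a) * pa (th + 0 *\<^sub>R axis i 1) (y # zs)
         + (pa th (y # zs) * sc i (y # zs)) * (C * \<pi> q s a (th + 0 *\<^sub>R axis i 1))
       = pa th (x # y # zs) * sc i (x # y # zs)"
    by (simp add: x y C_def sc_def dk_def flip: pi_d[of q s a i]) (simp add: algebra_simps)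
  show ?case unfolding eqf using hm val by simp
qed

lemma score:
  assumes "pa th xs > 0"
  shows "partial i (\<lambda>th'. ln (pa th' xs)) th = sc i xs"
proof -
  have "((\<lambda>t. ln (pa (th + t *\<^sub>R axis i 1) xs)) has_real_derivative (1 / pa th xs) * (pa th xs * sc i xs)) (at 0)"
    using DERIV_chain2[OF DERIV_ln_divide pa_deriv[OF assms], of i] assms by simp
  then show ?thesis using assms unfolding partial_def by (simp add: DERIV_imp_deriv)
qed

end



lemma sum_len_Suc:
  "(\<Sum>xs\<in>{xs::('b::finite) list. length xs = Suc n}. g xs) = (\<Sum>y\<in>UNIV. \<Sum>ys\<in>{xs. length xs = n}. g (y # ys))"
proof -
  have fin: "finite {xs::'b list. length xs = n}" for n
    using finite_lists_length_eq[of "UNIV::'b set" n] by simp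
  have "{xs::'b list. length xs = Suc n} = (\<lambda>(y, ys). y # ys) ` (UNIV \<times> {xs. length xs = n})"
    by (auto simp: length_Suc_conv image_iff)
  moreover have "inj_on (\<lambda>(y, ys). y # ys) (UNIV \<times> {xs::'b list. length xs = n})"
    by (auto simp: inj_on_def)
  ultimately have "(\<Sum>xs\<in>{xs::'b list. length xs = Suc n}. g xs) = (\<Sum>(y, ys)\<in>UNIV \<times> {xs. length xs = n}. g (y # ys))"
    by (simp add: sum.reindex case_prod_unfold)
  also have "\<dots> = (\<Sum>y\<in>UNIV. \<Sum>ys\<in>{xs. length xs = n}. g (y # ys))"
    by (rule sum.cartesian_product[symmetric])
  finally show ?thesis .
qed

lemma sum_head:
  "(\<Sum>y\<in>(UNIV::('s::finite \<times> 'q::finite \<times> 'a::finite) set). if (fst y, fst (snd y)) = x then g y else 0)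
     = (\<Sum>a\<in>UNIV. g (fst x, snd x, a))"
proof -
  have "(\<Sum>y\<in>(UNIV::('s \<times> 'q \<times> 'a) set). if (fst y, fst (snd y)) = x then g y else 0)
      = (\<Sum>y\<in>{y. (fst y, fst (snd y)) = x}. g y)"
    by (simp add: sum.inter_filter[symmetric])
  also have "{y::'s \<times> 'q \<times> 'a. (fst y, fst (snd y)) = x} = (\<lambda>a. (fst x, snd x, a)) ` UNIV"
    by (auto simp: image_iff)
  also have "(\<Sum>y\<in>(\<lambda>a. (fst x, snd x, a)) ` UNIV. g y) = (\<Sum>a\<in>UNIV. g (fst x, snd x, a))"
    by (subst sum.reindex) (auto simp: inj_on_def)
  finally show ?thesis .
qed

context optn begin

definition pp :: "'s \<times> 'q \<Rightarrow> ('s \<times> 'q \<times> 'a) list \<Rightarrow> real" where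
  "pp x xs = path_prob \<pi> P \<beta> \<pi>O (fst x) (snd x) th xs"
definition w :: "'s \<times> 'q \<times> 'a \<Rightarrow> 's \<times> 'q \<Rightarrow> real" where
  "w y x' = (case y of (s, q, a) \<Rightarrow> case x' of (s', q') \<Rightarrow> \<pi> q s a th * P s a s' * opt_next \<beta> \<pi>O q s' q')"
definition pip :: "'s \<times> 'q \<times> 'a \<Rightarrow> real" where
  "pip y = (case y of (s, q, a) \<Rightarrow> \<pi> q s a th)"

lemma pp_single: "pp x [y] = (if (fst y, fst (snd y)) = x then pip y else 0)"
  by (cases y; cases x) (auto simp: pp_def path_prob_def pip_def)

lemma pp_cons: assumes "r \<noteq> []"
  shows "pp x (y # r) = (if (fst y, fst (snd y)) = x then \<Sum>x'\<in>UNIV. w y x' * pp x' r else 0)"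
proof -
  obtain s q a where y: "y = (s, q, a)" by (cases y)
  obtain s' q' a' r' where r: "r = (s', q', a') # r'" using assms by (cases r) auto
  have "(\<Sum>x'\<in>UNIV. w y x' * pp x' r) = (\<Sum>x'\<in>UNIV. if x' = (s', q') then w y (s', q') * pa th r else 0)"
    by (rule sum.cong) (auto simp: pp_def path_prob_def r)
  also have "\<dots> = w y (s', q') * pa th r" by simp
  finally have "(\<Sum>x'\<in>UNIV. w y x' * pp x' r) = w y (s', q') * pa th r" .
  then show ?thesis
    by (cases x) (auto simp: pp_def path_prob_def y r w_def mult_ac)
qed

lemma wsum: "(\<Sum>x'\<in>UNIV. w y x') = pip y"
proof -
  obtain s q a where y: "y = (s, q, a)" by (cases y)
  have "(\<Sum>x'\<in>UNIV. w y x') = (\<Sum>s'\<in>UNIV. \<Sum>q'\<in>UNIV. \<pi> q s a th * P s a s' * opt_next \<beta> \<pi>O q s' q')"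
    by (simp add: sum_pair w_def y)
  also have "\<dots> = (\<Sum>s'\<in>UNIV. \<pi> q s a th * P s a s' * (\<Sum>q'\<in>UNIV. opt_next \<beta> \<pi>O q s' q'))"
    by (simp add: sum_distrib_left)
  also have "\<dots> = \<pi> q s a th * (\<Sum>s'\<in>UNIV. P s a s')"
    by (simp add: opt_next_sum[OF \<pi>O_sum] sum_distrib_left)
  also have "\<dots> = pip y" by (simp add: P_sum pip_def y)
  finally show ?thesis .
qed

lemma pip_sum: "(\<Sum>a\<in>UNIV. pip (s, q, a)) = 1"
  by (simp add: pip_def \<pi>_sum)

lemma rest:
  assumes "m \<ge> 1"
  shows "(\<Sum>r\<in>{xs. length xs = m}. pp x (y # r) * H r)
    = (if (fst y, fst (snd y)) = x then \<Sum>x'\<in>UNIV. w y x' * (\<Sum>r\<in>{xs. length xs = m}. pp x' r * H r) else 0)"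
proof -
  have "(\<Sum>r\<in>{xs. length xs = m}. pp x (y # r) * H r)
      = (\<Sum>r\<in>{xs. length xs = m}. (if (fst y, fst (snd y)) = x then \<Sum>x'\<in>UNIV. w y x' * pp x' r * H r else 0))"
  proof (rule sum.cong[OF refl])
    fix r :: "('s \<times> 'q \<times> 'a) list" assume "r \<in> {xs. length xs = m}"
    then have "r \<noteq> []" using assms by auto
    then show "pp x (y # r) * H r = (if (fst y, fst (snd y)) = x then \<Sum>x'\<in>UNIV. w y x' * pp x' r * H r else 0)"
      by (simp add: pp_cons sum_distrib_right)
  qed
  also have "\<dots> = (if (fst y, fst (snd y)) = x then \<Sum>x'\<in>UNIV. w y x' * (\<Sum>r\<in>{xs. length xs = m}. pp x' r * H r) else 0)"
    by (auto simp: sum_distrib_left mult_ac intro: sum.swap)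
  finally show ?thesis .
qed

definition MM where "MM n x = (\<Sum>xs\<in>{xs. length xs = n}. pp x xs)"
definition AA where "AA k n x = (\<Sum>xs\<in>{xs. length xs = n}. pp x xs * sc k xs)"
definition FF where "FF i j n x = (\<Sum>xs\<in>{xs. length xs = n}. pp x xs * sc i xs * sc j xs)"

lemma MM1: "MM (Suc n) x = 1"
proof (induction n arbitrary: x)
  case 0
  have "MM (Suc 0) x = (\<Sum>y\<in>UNIV. if (fst y, fst (snd y)) = x then pip y else 0)"
    unfolding MM_def sum_len_Suc by (simp add: pp_single)
  also have "\<dots> = 1" by (simp add: sum_head pip_sum)
  finally show ?case .
next
  case (Suc n)
  have "MM (Suc (Suc n)) x = (\<Sum>y\<in>UNIV. \<Sum>r\<in>{xs. length xs = Suc n}. pp x (y # r) * 1)"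
    unfolding MM_def sum_len_Suc[of _ "Suc n"] by simp
  also have "\<dots> = (\<Sum>y\<in>UNIV. if (fst y, fst (snd y)) = x then \<Sum>x'\<in>UNIV. w y x' * MM (Suc n) x' else 0)"
    using rest[of "Suc n" x _ "\<lambda>_. 1"] by (simp add: MM_def cong: if_cong)
  also have "\<dots> = 1" by (simp add: Suc wsum sum_head pip_sum)
  finally show ?case .
qed

lemma AA0: "AA k (Suc n) x = 0"
proof (induction n arbitrary: x)
  case 0
  have "AA k (Suc 0) x = (\<Sum>y\<in>UNIV. if (fst y, fst (snd y)) = x then pip y * dk k y else 0)"
    unfolding AA_def sum_len_Suc by (simp add: pp_single sc_def if_distrib[of "\<lambda>u. u * _"] cong: if_cong)
  also have "\<dots> = 0" by (simp add: sum_head pip_def dk_def sum_pi_d)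
  finally show ?case .
next
  case (Suc n)
  have "AA k (Suc (Suc n)) x = (\<Sum>y\<in>UNIV. \<Sum>r\<in>{xs. length xs = Suc n}. pp x (y # r) * (dk k y + sc k r))"
    unfolding AA_def sum_len_Suc[of _ "Suc n"] by (simp add: sc_def)
  also have "\<dots> = (\<Sum>y\<in>UNIV. if (fst y, fst (snd y)) = x then \<Sum>x'\<in>UNIV. w y x' * (dk k y * MM (Suc n) x' + AA k (Suc n) x') else 0)"
  proof (rule sum.cong[OF refl])
    fix y
    have "(\<Sum>r\<in>{xs. length xs = Suc n}. pp x' r * (dk k y + sc k r)) = dk k y * MM (Suc n) x' + AA k (Suc n) x'" for x'
      by (simp add: MM_def AA_def distrib_left sum.distrib sum_distrib_left mult_ac)
    then show "(\<Sum>r\<in>{xs. length xs = Suc n}. pp x (y # r) * (dk k y + sc k r)) = (if (fst y, fst (snd y)) = x then \<Sum>x'\<in>UNIV. w y x' * (dk k y * MM (Suc n) x' + AA k (Suc n) x') else 0)"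
      by (simp add: rest[of "Suc n"])
  qed
  also have "\<dots> = (\<Sum>y\<in>UNIV. if (fst y, fst (snd y)) = x then pip y * dk k y else 0)"
    by (simp add: Suc MM1 wsum flip: sum_distrib_right cong: if_cong)
  also have "\<dots> = 0" by (simp add: sum_head pip_def dk_def sum_pi_d)
  finally show ?case .
qed

end



lemma kpow0sum: "(\<Sum>z\<in>UNIV. kpow K 0 x z * g z) = g x"
proof -
  have "(\<Sum>z\<in>UNIV. kpow K 0 x z * g z) = (\<Sum>z\<in>UNIV. if z = x then g z else 0)"
    by (rule sum.cong) auto
  also have "\<dots> = g x" by simp
  finally show ?thesis .
qed

context optn begin

definition ff where "ff i j x = (case x of (s, q) \<Rightarrow> \<Sum>a\<in>UNIV. \<pi> q s a th * d i q s a * d j q s a)"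
abbreviation KK where "KK \<equiv> so_kernel \<pi> P \<beta> \<pi>O th"

lemma K_eq: "KK x x' = (\<Sum>a\<in>UNIV. w (fst x, snd x, a) x')"
  by (cases x; cases x') (simp add: so_kernel_def w_def)

lemma ff_eq: "(\<Sum>y\<in>UNIV. if (fst y, fst (snd y)) = x then pip y * dk i y * dk j y else 0) = ff i j x"
proof -
  obtain s q where x: "x = (s, q)" by (cases x)
  show ?thesis using sum_head[of x "\<lambda>y. pip y * dk i y * dk j y"]
    by (simp add: pip_def dk_def ff_def x)
qed

lemma FF_eq: "FF i j (Suc n) x = (\<Sum>t<Suc n. \<Sum>z\<in>UNIV. kpow KK t x z * ff i j z)"
proof (induction n arbitrary: x)
  case 0
  have "FF i j (Suc 0) x = (\<Sum>y\<in>UNIV. if (fst y, fst (snd y)) = x then pip y * dk i y * dk j y else 0)"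
    unfolding FF_def sum_len_Suc by (rule sum.cong) (auto simp: pp_single sc_def)
  also have "\<dots> = ff i j x" by (rule ff_eq)
  finally show ?case using kpow0sum[of KK x "ff i j"] by simp
next
  case (Suc n)
  have "FF i j (Suc (Suc n)) x = (\<Sum>y\<in>UNIV. \<Sum>r\<in>{xs. length xs = Suc n}. pp x (y # r) * ((dk i y + sc i r) * (dk j y + sc j r)))"
    unfolding FF_def sum_len_Suc[of _ "Suc n"] by (simp add: sc_def mult_ac)
  also have "\<dots> = (\<Sum>y\<in>UNIV. if (fst y, fst (snd y)) = x then \<Sum>x'\<in>UNIV. w y x' *
       (dk i y * dk j y * MM (Suc n) x' + dk i y * AA j (Suc n) x' + dk j y * AA i (Suc n) x' + FF i j (Suc n) x') else 0)"
  proof (rule sum.cong[OF refl])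
    fix y
    have "(\<Sum>r\<in>{xs. length xs = Suc n}. pp x' r * ((dk i y + sc i r) * (dk j y + sc j r)))
       = dk i y * dk j y * MM (Suc n) x' + dk i y * AA j (Suc n) x' + dk j y * AA i (Suc n) x' + FF i j (Suc n) x'" for x'
      by (simp add: MM_def AA_def FF_def algebra_simps sum.distrib sum_distrib_left)
    then show "(\<Sum>r\<in>{xs. length xs = Suc n}. pp x (y # r) * ((dk i y + sc i r) * (dk j y + sc j r))) = (if (fst y, fst (snd y)) = x then \<Sum>x'\<in>UNIV. w y x' *
       (dk i y * dk j y * MM (Suc n) x' + dk i y * AA j (Suc n) x' + dk j y * AA i (Suc n) x' + FF i j (Suc n) x') else 0)"
      by (simp add: rest[of "Suc n"])
  qed
  also have "\<dots> = (\<Sum>y\<in>UNIV. (if (fst y, fst (snd y)) = x then pip y * dk i y * dk j y else 0)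
      + (if (fst y, fst (snd y)) = x then \<Sum>x'\<in>UNIV. w y x' * FF i j (Suc n) x' else 0))"
    by (rule sum.cong[OF refl]) (simp add: MM1 AA0 distrib_left sum.distrib wsum flip: sum_distrib_right)
  also have "\<dots> = ff i j x + (\<Sum>x'\<in>UNIV. KK x x' * FF i j (Suc n) x')"
    by (simp add: sum.distrib ff_eq sum_head K_eq sum_distrib_right) (rule sum.swap)
  also have "\<dots> = ff i j x + (\<Sum>x'\<in>UNIV. KK x x' * (\<Sum>t<Suc n. \<Sum>z\<in>UNIV. kpow KK t x' z * ff i j z))"
    by (simp add: Suc)
  also have "\<dots> = (\<Sum>t<Suc (Suc n). \<Sum>z\<in>UNIV. kpow KK t x z * ff i j z)"
  proof -
    have "(\<Sum>t<Suc n. \<Sum>z\<in>UNIV. kpow KK (Suc t) x z * ff i j z)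
        = (\<Sum>x'\<in>UNIV. KK x x' * (\<Sum>t<Suc n. \<Sum>z\<in>UNIV. kpow KK t x' z * ff i j z))"
    proof -
      have e1: "(\<Sum>z\<in>UNIV. kpow KK (Suc t) x z * ff i j z) = (\<Sum>x'\<in>UNIV. KK x x' * (\<Sum>z\<in>UNIV. kpow KK t x' z * ff i j z))" for t
        by (simp only: kpow_Suc_left sum_distrib_right sum_distrib_left mult.assoc) (rule sum.swap)
      show ?thesis by (simp only: e1 sum_distrib_left) (rule sum.swap)
    qed
    then show ?thesis
      by (simp only: sum.lessThan_Suc_shift kpow0sum)
  qed
  finally show ?case .
qed

lemma fisher_eq:
  "fisher_T \<pi> P \<beta> \<pi>O s0 q0 th (Suc n) i j = FF i j (Suc n) (s0, q0)"
  unfolding fisher_T_def FF_def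
proof (rule sum.cong[OF refl])
  fix xs :: "('s \<times> 'q \<times> 'a) list" assume "xs \<in> {xs. length xs = Suc n}"
  then obtain s q a r where xs: "xs = (s, q, a) # r" by (cases xs) auto
  show "path_prob \<pi> P \<beta> \<pi>O s0 q0 th xs * partial i (\<lambda>th'. ln (path_prob \<pi> P \<beta> \<pi>O s0 q0 th' xs)) th *
        partial j (\<lambda>th'. ln (path_prob \<pi> P \<beta> \<pi>O s0 q0 th' xs)) th = pp (s0, q0) xs * sc i xs * sc j xs"
  proof (cases "s = s0 \<and> q = q0")
    case False then show ?thesis by (auto simp: pp_def path_prob_def xs)
  next
    case True
    then have eq: "path_prob \<pi> P \<beta> \<pi>O s0 q0 th' xs = pa th' xs" for th'
      by (simp add: path_prob_def xs)
    show ?thesis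
    proof (cases "pa th xs = 0")
      case True then show ?thesis by (simp add: eq pp_def)
    next
      case False
      then have "pa th xs > 0" using pa_nonneg[of th xs] by simp
      then show ?thesis by (simp add: eq pp_def score)
    qed
  qed
qed

end



theorem theorem1:
  fixes \<pi> :: "'q::finite \<Rightarrow> 's::finite \<Rightarrow> 'a::finite \<Rightarrow> real^'p \<Rightarrow> real"
    and P :: "'s \<Rightarrow> 'a \<Rightarrow> 's \<Rightarrow> real"
    and \<beta> :: "'q \<Rightarrow> 's \<Rightarrow> real"
    and \<pi>O :: "'s \<Rightarrow> 'q \<Rightarrow> real"
    and \<mu> :: "'s \<times> 'q \<Rightarrow> real"
    and th :: "real^'p" and s0 :: 's and q0 :: 'q
  assumes P_nonneg: "\<And>s a s'. P s a s' \<ge> 0"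
    and P_sum: "\<And>s a. (\<Sum>s'\<in>UNIV. P s a s') = 1"
    and \<pi>_nonneg: "\<And>q s a th'. \<pi> q s a th' \<ge> 0"
    and \<pi>_sum: "\<And>q s th'. (\<Sum>a\<in>UNIV. \<pi> q s a th') = 1"
    and \<pi>_diff: "\<And>q s a. (\<lambda>th'. \<pi> q s a th') differentiable (at th)"
    and \<beta>_range: "\<And>q s. 0 \<le> \<beta> q s \<and> \<beta> q s \<le> 1"
    and \<pi>O_nonneg: "\<And>s q. \<pi>O s q \<ge> 0"
    and \<pi>O_sum: "\<And>s. (\<Sum>q\<in>UNIV. \<pi>O s q) = 1"
    and irred: "irreducible_chain (so_kernel \<pi> P \<beta> \<pi>O th)"
    and aper: "aperiodic_chain (so_kernel \<pi> P \<beta> \<pi>O th)"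
    and stat: "stationary_dist (so_kernel \<pi> P \<beta> \<pi>O th) \<mu>"
  shows "\<forall>i j. (\<lambda>T. fisher_T \<pi> P \<beta> \<pi>O s0 q0 th T i j / real T)
           \<longlonglongrightarrow> avg_fisher \<pi> \<mu> th i j"
proof (intro allI)
  fix i j
  interpret o: optn \<pi> P \<beta> \<pi>O th
    by (simp add: optn_def P_nonneg P_sum \<pi>_nonneg \<pi>_sum \<pi>_diff \<beta>_range \<pi>O_nonneg \<pi>O_sum)
  have Knn: "so_kernel \<pi> P \<beta> \<pi>O th x y \<ge> 0" for x y
    unfolding so_kernel_def
    by (cases x; cases y) (auto intro!: sum_nonneg mult_nonneg_nonneg \<pi>_nonneg P_nonneg o.opt_nn)
  have Krs: "(\<Sum>y\<in>UNIV. so_kernel \<pi> P \<beta> \<pi>O th x y) = 1" for x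
  proof -
    have "(\<Sum>y\<in>UNIV. so_kernel \<pi> P \<beta> \<pi>O th x y) = (\<Sum>a\<in>UNIV. \<Sum>y\<in>UNIV. o.w (fst x, snd x, a) y)"
      by (simp add: o.K_eq) (rule sum.swap)
    also have "\<dots> = 1" by (simp add: o.wsum o.pip_sum)
    finally show ?thesis .
  qed
  have ces: "(\<lambda>T. (\<Sum>t<T. kpow (so_kernel \<pi> P \<beta> \<pi>O th) t (s0, q0) z) / real T) \<longlonglongrightarrow> \<mu> z" for z
    by (rule cesaro[OF Knn Krs irred stat])
  have lim: "(\<lambda>n. \<Sum>z\<in>UNIV. ((\<Sum>t<Suc n. kpow (so_kernel \<pi> P \<beta> \<pi>O th) t (s0, q0) z) / real (Suc n)) * o.ff i j z)
      \<longlonglongrightarrow> (\<Sum>z\<in>UNIV. \<mu> z * o.ff i j z)"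
    by (intro tendsto_sum tendsto_mult tendsto_const LIMSEQ_Suc[OF ces])
  have eq1: "fisher_T \<pi> P \<beta> \<pi>O s0 q0 th (Suc n) i j / real (Suc n)
      = (\<Sum>z\<in>UNIV. ((\<Sum>t<Suc n. kpow (so_kernel \<pi> P \<beta> \<pi>O th) t (s0, q0) z) / real (Suc n)) * o.ff i j z)" for n
    unfolding o.fisher_eq o.FF_eq
    by (simp only: sum_divide_distrib times_divide_eq_left sum_distrib_right) (rule sum.swap)
  have eq2: "avg_fisher \<pi> \<mu> th i j = (\<Sum>z\<in>UNIV. \<mu> z * o.ff i j z)"
    unfolding avg_fisher_def o.ff_def o.d_def
    by (rule sum.cong) (auto split: prod.splits)
  show "(\<lambda>T. fisher_T \<pi> P \<beta> \<pi>O s0 q0 th T i j / real T) \<longlonglongrightarrow> avg_fisher \<pi> \<mu> th i j"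
    by (rule LIMSEQ_imp_Suc) (unfold eq1 eq2, rule lim)
qed


end
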